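(* Let $T\in(0,\infty]$ and let $u(x,t)=(u_1,u_2)$, $x=(x_1,x_2)\in\mathbb{R}^2$, $t\in[0,T)$, be a smooth velocity field given by a smooth stream function $\psi(x,t)$ via $u=\nabla^{\perp}\psi=\left(-\frac{\partial\psi}{\partial x_2},\frac{\partial\psi}{\partial x_1}\right)$, and let $\theta$ be a smooth solution of $(\partial_t+u\cdot\nabla)\theta=0$ on $[0,T)$. Assume the fluid forms a sharp front at time $T$ (in the sense defined in the context), with curves $x_2=f_\pm(x_1,t)$, $x_1\in[a,b]$. Then for all $t\in[0,T)$, $$\frac{d}{dt}\int_a^b\big[f_+(x_1,t)-f_-(x_1,t)\big]\,dx_1=\psi(b,f_+(b,t),t)-\psi(b,f_-(b,t),t)+\psi(a,f_-(a,t),t)-\psi(a,f_+(a,t),t).$$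
   Context: Sharp front at time $T$: there are an interval $[a,b]$ with $a<b$ and functions $f_\pm\in C^1([a,b]\times[0,T))$ such that (i) $f_-(x_1,t)<f_+(x_1,t)$ for all $x_1\in[a,b]$, $t\in[0,T)$; (ii) the arcs $\Gamma_\pm(t)=\{(x_1,x_2): x_2=f_\pm(x_1,t),\ x_1\in[a,b]\}$ move with the fluid, i.e. $u_2(x_1,x_2,t)=\frac{\partial f_\pm}{\partial x_1}(x_1,t)\,u_1(x_1,x_2,t)+\frac{\partial f_\pm}{\partial t}(x_1,t)$ at $x_2=f_\pm(x_1,t)$, for all $x_1\in[a,b]$, $t\in[0,T)$; (iii) $\lim_{t\to T^-}(f_+(x_1,t)-f_-(x_1,t))=0$ for all $x_1\in[a,b]$; and (iv) $f_+(x_1,t)-f_-(x_1,t)$ is bounded on $[a,b]\times[0,T)$. *)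

theory Defs
  imports "HOL-Analysis.Analysis"
begin

definition dpart :: "'a::euclidean_space \<Rightarrow> ('a \<Rightarrow> real) \<Rightarrow> 'a \<Rightarrow> real" where
  "dpart v g x = deriv (\<lambda>s. g (x + s *\<^sub>R v)) 0"

definition iter_dpart :: "'a::euclidean_space list \<Rightarrow> ('a \<Rightarrow> real) \<Rightarrow> 'a \<Rightarrow> real" where
  "iter_dpart vs g = foldr dpart vs g"

definition C_infinity_on :: "'a::euclidean_space set \<Rightarrow> ('a \<Rightarrow> real) \<Rightarrow> bool" where
  "C_infinity_on U g \<longleftrightarrow> open U \<and>
     (\<forall>vs. set vs \<subseteq> Basis \<longrightarrow>
        continuous_on U (iter_dpart vs g) \<and>
        (\<forall>v\<in>Basis. \<forall>x\<in>U. (\<lambda>s. iter_dpart vs g (x + s *\<^sub>R v)) differentiable (at 0)))"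

definition time_int :: "ereal \<Rightarrow> real set" where
  "time_int T = {t. 0 \<le> t \<and> ereal t < T}"

definition before :: "ereal \<Rightarrow> real filter" where
  "before T = (if T = \<infinity> then at_top else at_left (real_of_ereal T))"

(* f \<in> C^1(S), S \<subseteq> R^2, with partial derivatives D1 (w.r.t. x1) and Dt (w.r.t. t),
   derivatives taken within S (one-sided at the boundary) and continuous on S *)
definition C1_with_partials ::
    "(real \<times> real) set \<Rightarrow> (real \<Rightarrow> real \<Rightarrow> real) \<Rightarrow> (real \<Rightarrow> real \<Rightarrow> real) \<Rightarrow> (real \<Rightarrow> real \<Rightarrow> real) \<Rightarrow> bool" where
  "C1_with_partials S f D1 Dt \<longleftrightarrow>
     (\<forall>p\<in>S. ((\<lambda>q. f (fst q) (snd q)) has_derivative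
               (\<lambda>h. fst h * D1 (fst p) (snd p) + snd h * Dt (fst p) (snd p))) (at p within S))
     \<and> continuous_on S (\<lambda>q. D1 (fst q) (snd q)) \<and> continuous_on S (\<lambda>q. Dt (fst q) (snd q))"

definition sharp_front ::
    "(real \<times> real \<times> real \<Rightarrow> real) \<Rightarrow> (real \<times> real \<times> real \<Rightarrow> real) \<Rightarrow> ereal \<Rightarrow> real \<Rightarrow> real \<Rightarrow>
     (real \<Rightarrow> real \<Rightarrow> real) \<Rightarrow> (real \<Rightarrow> real \<Rightarrow> real) \<Rightarrow> bool" where
  "sharp_front u1 u2 T a b fm fp \<longleftrightarrow> a < b \<and>
     (\<exists>Dm1 Dmt Dp1 Dpt.
        C1_with_partials ({a..b} \<times> time_int T) fm Dm1 Dmt \<and>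
        C1_with_partials ({a..b} \<times> time_int T) fp Dp1 Dpt \<and>
        (\<forall>x1\<in>{a..b}. \<forall>t\<in>time_int T. fm x1 t < fp x1 t) \<and>
        (\<forall>x1\<in>{a..b}. \<forall>t\<in>time_int T.
           u2 (x1, fm x1 t, t) = Dm1 x1 t * u1 (x1, fm x1 t, t) + Dmt x1 t \<and>
           u2 (x1, fp x1 t, t) = Dp1 x1 t * u1 (x1, fp x1 t, t) + Dpt x1 t)) \<and>
     (\<forall>x1\<in>{a..b}. ((\<lambda>t. fp x1 t - fm x1 t) \<longlongrightarrow> 0) (before T)) \<and>
     (\<exists>M. \<forall>x1\<in>{a..b}. \<forall>t\<in>time_int T. \<bar>fp x1 t - fm x1 t\<bar> \<le> M)"

end

theory Submission
  imports Defs
begin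

lemma partials_frechet:
  fixes F P1 P2 :: "real \<times> real \<Rightarrow> real"
  assumes d1: "\<And>x y. ((\<lambda>s. F (s,y)) has_real_derivative P1 (x,y)) (at x)"
    and d2: "\<And>x y. ((\<lambda>s. F (x,s)) has_real_derivative P2 (x,y)) (at y)"
    and c1: "\<And>q. isCont P1 q"
  shows "(F has_derivative (\<lambda>h. fst h * P1 p + snd h * P2 p)) (at p)"
proof -
  obtain x y where p: "p = (x,y)" by fastforce
  have bl: "bounded_linear (\<lambda>h::real\<times>real. fst h * P1 p + snd h * P2 p)"
    by (rule linear_conv_bounded_linear[THEN iffD1]) (auto intro!: linearI simp: algebra_simps)
  show ?thesis unfolding has_derivative_at_alt
  proof (intro conjI bl allI impI)
    fix e :: real assume e: "e > 0"
    obtain d1 where d1p: "d1 > 0" and d1h: "\<And>q. dist q (x,y) < d1 \<Longrightarrow> dist (P1 q) (P1 (x,y)) < e/2"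
      using c1[of "(x,y)"] e unfolding continuous_at_eps_delta by (meson half_gt_zero)
    have "((\<lambda>s. F (x,s)) has_derivative (\<lambda>h. h * P2 (x,y))) (at y)"
      using d2[of x y] unfolding has_field_derivative_def by (simp add: mult.commute[of _ "P2 (x,y)"])
    then obtain d2 where d2p: "d2 > 0" and d2h: "\<And>k. norm (k - y) < d2 \<Longrightarrow>
        norm (F (x,k) - F (x,y) - (k - y) * P2 (x,y)) \<le> e/2 * norm (k - y)"
      unfolding has_derivative_at_alt using e by (meson half_gt_zero)
    show "\<exists>d>0. \<forall>z. norm (z - p) < d \<longrightarrow>
        norm (F z - F p - (fst (z - p) * P1 p + snd (z - p) * P2 p)) \<le> e * norm (z - p)"
    proof (intro exI[of _ "min d1 d2"] conjI allI impI)
      show "min d1 d2 > 0" using d1p d2p by simp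
      fix z assume z: "norm (z - p) < min d1 d2"
      obtain x' y' where zz: "z = (x',y')" by fastforce
      have nx: "\<bar>x' - x\<bar> \<le> norm (z - p)" using norm_fst_le[of "x'-x" "y'-y"] by (simp add: p zz)
      have ny: "\<bar>y' - y\<bar> \<le> norm (z - p)" using norm_snd_le[of "y'-y" "x'-x"] by (simp add: p zz)
      define phi where "phi s = F (s,y') - s * P1 (x,y)" for s
      have seg: "\<bar>s - x\<bar> \<le> \<bar>x' - x\<bar>" if "s \<in> closed_segment x x'" for s
        using that by (auto simp: closed_segment_eq_real_ivl split: if_splits)
      have "norm (phi x' - phi x) \<le> e/2 * norm (x' - x)"
      proof (rule field_differentiable_bound[where S="closed_segment x x'" and f'="\<lambda>s. P1 (s,y') - P1 (x,y)"])
        show "convex (closed_segment x x')" by simp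
        fix s assume s: "s \<in> closed_segment x x'"
        show "(phi has_field_derivative P1 (s,y') - P1 (x,y)) (at s within closed_segment x x')"
          unfolding phi_def
          by (rule derivative_eq_intros d1[THEN DERIV_subset] | simp)+
        have "dist (s,y') (x,y) \<le> norm (z - p)"
        proof -
          have "dist (s,y') (x,y) = sqrt ((s-x)^2 + (y'-y)^2)"
            by (simp add: dist_Pair_Pair dist_real_def)
          also have "\<dots> \<le> sqrt ((x'-x)^2 + (y'-y)^2)"
            using seg[OF s] by (simp add: power_mono abs_le_square_iff)
          also have "\<dots> = norm (z - p)" by (simp add: p zz norm_Pair)
          finally show ?thesis .
        qed
        then have "dist (P1 (s,y')) (P1 (x,y)) < e/2" using z by (intro d1h) simp
        then show "norm (P1 (s,y') - P1 (x,y)) \<le> e/2" by (simp add: dist_norm)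
      qed auto
      moreover have "norm (F (x,y') - F (x,y) - (y' - y) * P2 (x,y)) \<le> e/2 * norm (y' - y)"
        using z ny by (intro d2h) auto
      ultimately have "\<bar>F z - F p - (fst (z - p) * P1 p + snd (z - p) * P2 p)\<bar> \<le> e/2 * \<bar>x'-x\<bar> + e/2 * \<bar>y'-y\<bar>"
        apply (simp add: p zz phi_def algebra_simps) by (simp add: abs_le_iff abs_if split: if_splits; linarith)
      also have "\<dots> \<le> e/2 * norm (z-p) + e/2 * norm (z-p)"
        using nx ny e by (intro add_mono mult_left_mono) auto
      finally show "norm (F z - F p - (fst (z - p) * P1 p + snd (z - p) * P2 p)) \<le> e * norm (z - p)"
        by simp
    qed
  qed
qed


lemma C1_space_deriv:
  assumes C1: "C1_with_partials ({a..b} \<times> I) f D1 Dt"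
    and t: "t \<in> I" and x: "x \<in> {a..b}"
  shows "((\<lambda>x1. f x1 t) has_derivative (\<lambda>h. h * D1 x t)) (at x within {a..b})"
proof -
  have hf: "((\<lambda>q. f (fst q) (snd q)) has_derivative (\<lambda>h. fst h * D1 x t + snd h * Dt x t))
      (at (x,t) within ({a..b} \<times> I))"
    using C1 x t unfolding C1_with_partials_def by fastforce
  have hp: "((\<lambda>x1. (x1,t)) has_derivative (\<lambda>h. (h,0))) (at x within {a..b})"
    by (auto intro!: derivative_eq_intros)
  have "(\<lambda>x1. (x1,t)) ` {a..b} \<subseteq> {a..b} \<times> I" using t by auto
  then have hf': "((\<lambda>q. f (fst q) (snd q)) has_derivative (\<lambda>h. fst h * D1 x t + snd h * Dt x t))
      (at ((\<lambda>x1. (x1,t)) x) within ((\<lambda>x1. (x1,t)) ` {a..b}))"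
    by (simp only: has_derivative_subset[OF hf])
  show ?thesis using has_derivative_in_compose[OF hp hf'] by simp
qed

lemma C1_time_deriv:
  assumes C1: "C1_with_partials ({a..b} \<times> I) f D1 Dt"
    and t: "t \<in> I" and x: "x \<in> {a..b}"
  shows "((\<lambda>s. f x s) has_real_derivative Dt x t) (at t within I)"
proof -
  have hf: "((\<lambda>q. f (fst q) (snd q)) has_derivative (\<lambda>h. fst h * D1 x t + snd h * Dt x t))
      (at (x,t) within ({a..b} \<times> I))"
    using C1 x t unfolding C1_with_partials_def by fastforce
  have hp: "((\<lambda>s. (x,s)) has_derivative (\<lambda>h. (0,h))) (at t within I)"
    by (auto intro!: derivative_eq_intros)
  have "(\<lambda>s. (x,s)) ` I \<subseteq> {a..b} \<times> I" using x by auto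
  then have hf': "((\<lambda>q. f (fst q) (snd q)) has_derivative (\<lambda>h. fst h * D1 x t + snd h * Dt x t))
      (at ((\<lambda>s. (x,s)) t) within ((\<lambda>s. (x,s)) ` I))"
    by (simp only: has_derivative_subset[OF hf])
  show ?thesis using has_derivative_in_compose[OF hp hf'] unfolding has_field_derivative_def
    by (simp add: mult.commute[of _ "Dt x t"])
qed

lemma arc_integral:
  fixes \<Psi> :: "real \<times> real \<Rightarrow> real"
  assumes C1: "C1_with_partials ({a..b} \<times> I) f D1 Dt"
    and t: "t \<in> I" and ab: "a \<le> b"
    and fr: "\<And>p. (\<Psi> has_derivative (\<lambda>h. fst h * Q1 p + snd h * Q2 p)) (at p)"
    and flow: "\<And>x1. x1 \<in> {a..b} \<Longrightarrow> Dt x1 t = Q1 (x1, f x1 t) + D1 x1 t * Q2 (x1, f x1 t)"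
  shows "((\<lambda>x1. Dt x1 t) has_integral (\<Psi> (b, f b t) - \<Psi> (a, f a t))) {a..b}"
proof -
  have "((\<lambda>x. Dt x t) has_integral ((\<lambda>x1. \<Psi> (x1, f x1 t)) b - (\<lambda>x1. \<Psi> (x1, f x1 t)) a)) {a..b}"
  proof (rule fundamental_theorem_of_calculus[OF ab])
  fix x assume x: "x \<in> {a..b}"
  have "((\<lambda>x1. (x1, f x1 t)) has_derivative (\<lambda>h. (h, h * D1 x t))) (at x within {a..b})"
    by (intro has_derivative_Pair has_derivative_ident C1_space_deriv[OF C1 t x])
  from has_derivative_compose[OF this fr]
  have "((\<lambda>x1. \<Psi> (x1, f x1 t)) has_derivative (\<lambda>h. h * Q1 (x, f x t) + h * D1 x t * Q2 (x, f x t))) (at x within {a..b})"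
    by simp
  then show "((\<lambda>x1. \<Psi> (x1, f x1 t)) has_vector_derivative Dt x t) (at x within {a..b})"
    unfolding has_vector_derivative_def
    by (rule has_derivative_eq_rhs) (auto simp: flow[OF x] algebra_simps)
  qed
  then show ?thesis by simp
qed


theorem lemma1:
  fixes T :: ereal and a b :: real
    and \<psi> \<theta> u1 u2 :: "real \<times> real \<times> real \<Rightarrow> real"
    and fm fp :: "real \<Rightarrow> real \<Rightarrow> real"
  assumes T_pos: "T > 0"
    and psi_smooth: "\<exists>U. {(x1, x2, t). t \<in> time_int T} \<subseteq> U \<and> C_infinity_on U \<psi>"
    and u1_def: "\<forall>x1 x2 t. t \<in> time_int T \<longrightarrow> u1 (x1, x2, t) = - dpart (0, 1, 0) \<psi> (x1, x2, t)"
    and u2_def: "\<forall>x1 x2 t. t \<in> time_int T \<longrightarrow> u2 (x1, x2, t) = dpart (1, 0, 0) \<psi> (x1, x2, t)"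
    and theta_smooth: "\<exists>U. {(x1, x2, t). t \<in> time_int T} \<subseteq> U \<and> C_infinity_on U \<theta>"
    and transport: "\<forall>x1 x2 t. t \<in> time_int T \<longrightarrow>
         dpart (0, 0, 1) \<theta> (x1, x2, t) + u1 (x1, x2, t) * dpart (1, 0, 0) \<theta> (x1, x2, t)
           + u2 (x1, x2, t) * dpart (0, 1, 0) \<theta> (x1, x2, t) = 0"
    and front: "sharp_front u1 u2 T a b fm fp"
  shows "\<forall>t\<in>time_int T.
           ((\<lambda>s. integral {a..b} (\<lambda>x1. fp x1 s - fm x1 s)) has_real_derivative
              (\<psi> (b, fp b t, t) - \<psi> (b, fm b t, t) + \<psi> (a, fm a t, t) - \<psi> (a, fp a t, t)))
             (at t within time_int T)"
proof
  fix t assume t: "t \<in> time_int T"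
  obtain Dm1 Dmt Dp1 Dpt where ab: "a < b"
    and C1m: "C1_with_partials ({a..b} \<times> time_int T) fm Dm1 Dmt"
    and C1p: "C1_with_partials ({a..b} \<times> time_int T) fp Dp1 Dpt"
    and flow: "\<forall>x1\<in>{a..b}. \<forall>t\<in>time_int T.
           u2 (x1, fm x1 t, t) = Dm1 x1 t * u1 (x1, fm x1 t, t) + Dmt x1 t \<and>
           u2 (x1, fp x1 t, t) = Dp1 x1 t * u1 (x1, fp x1 t, t) + Dpt x1 t"
    using front unfolding sharp_front_def by blast
  obtain U where sub: "{(x1, x2, t). t \<in> time_int T} \<subseteq> U" and CU: "C_infinity_on U \<psi>"
    using psi_smooth by blast
  have openU: "open U" using CU unfolding C_infinity_on_def by blast
  have inU: "\<And>x y. (x,y,t) \<in> U" using sub t by blast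
  have pd: "((\<lambda>s. \<psi> (q + s *\<^sub>R v)) has_real_derivative dpart v \<psi> q) (at 0)"
    if "v \<in> Basis" "q \<in> U" for v q
  proof -
    have "(\<lambda>s. iter_dpart [] \<psi> (q + s *\<^sub>R v)) differentiable (at 0)"
      using CU that unfolding C_infinity_on_def by (metis empty_set empty_subsetI)
    then show ?thesis unfolding dpart_def iter_dpart_def
      by (simp add: DERIV_deriv_iff_real_differentiable)
  qed
  have cont: "continuous_on U (dpart v \<psi>)" if "v \<in> Basis" for v
  proof -
    have "continuous_on U (iter_dpart [v] \<psi>)"
      using CU that unfolding C_infinity_on_def by simp
    then show ?thesis by (simp add: iter_dpart_def)
  qed
  have B1: "(1::real, 0::real, 0::real) \<in> Basis" by (simp add: Basis_prod_def zero_prod_def)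
  have B2: "(0::real, 1::real, 0::real) \<in> Basis" by (simp add: Basis_prod_def zero_prod_def)
  define Q1 where "Q1 q = dpart (1,0,0) \<psi> (fst q, snd q, t)" for q
  define Q2 where "Q2 q = dpart (0,1,0) \<psi> (fst q, snd q, t)" for q
  have fr: "((\<lambda>q. \<psi> (fst q, snd q, t)) has_derivative (\<lambda>h. fst h * Q1 p + snd h * Q2 p)) (at p)" for p
  proof (rule partials_frechet)
    fix x y
    have "((\<lambda>s. \<psi> (s + x, y, t)) has_real_derivative Q1 (x,y)) (at 0)"
      using pd[OF B1 inU[of x y]] by (simp add: Q1_def add.commute)
    then show "((\<lambda>s. \<psi> (fst (s, y), snd (s, y), t)) has_real_derivative Q1 (x, y)) (at x)"
      using DERIV_shift[of "\<lambda>s. \<psi> (s, y, t)" _ 0 x] by simp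
  next
    fix x y
    have "((\<lambda>s. \<psi> (x, s + y, t)) has_real_derivative Q2 (x,y)) (at 0)"
      using pd[OF B2 inU[of x y]] by (simp add: Q2_def add.commute)
    then show "((\<lambda>s. \<psi> (fst (x, s), snd (x, s), t)) has_real_derivative Q2 (x, y)) (at y)"
      using DERIV_shift[of "\<lambda>s. \<psi> (x, s, t)" _ 0 y] by simp
  next
    fix q :: "real \<times> real"
    have "isCont (dpart (1,0,0) \<psi>) (fst q, snd q, t)"
      using cont[OF B1] openU inU continuous_on_eq_continuous_at by blast
    then show "isCont Q1 q" unfolding Q1_def
      by (intro isCont_o2[where f="\<lambda>q. (fst q, snd q, t)" and g="dpart (1,0,0) \<psi>"]) (auto intro!: continuous_intros)
  qed
  have IP: "((\<lambda>x1. Dpt x1 t) has_integral ((\<lambda>q. \<psi> (fst q, snd q, t)) (b, fp b t) - (\<lambda>q. \<psi> (fst q, snd q, t)) (a, fp a t))) {a..b}"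
  proof (intro arc_integral[OF C1p t _ fr])
    show "a \<le> b" using ab by simp
    fix x1 :: real assume x1: "x1 \<in> {a..b}"
    then have "u2 (x1, fp x1 t, t) = Dp1 x1 t * u1 (x1, fp x1 t, t) + Dpt x1 t"
      using flow t by blast
    then show "Dpt x1 t = Q1 (x1, fp x1 t) + Dp1 x1 t * Q2 (x1, fp x1 t)"
      using t by (simp add: Q1_def Q2_def u1_def u2_def)
  qed
  have IM: "((\<lambda>x1. Dmt x1 t) has_integral ((\<lambda>q. \<psi> (fst q, snd q, t)) (b, fm b t) - (\<lambda>q. \<psi> (fst q, snd q, t)) (a, fm a t))) {a..b}"
  proof (intro arc_integral[OF C1m t _ fr])
    show "a \<le> b" using ab by simp
    fix x1 :: real assume x1: "x1 \<in> {a..b}"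
    then have "u2 (x1, fm x1 t, t) = Dm1 x1 t * u1 (x1, fm x1 t, t) + Dmt x1 t"
      using flow t by blast
    then show "Dmt x1 t = Q1 (x1, fm x1 t) + Dm1 x1 t * Q2 (x1, fm x1 t)"
      using t by (simp add: Q1_def Q2_def u1_def u2_def)
  qed
  have conv: "convex (time_int T)"
    unfolding is_interval_convex_1[symmetric] is_interval_1 time_int_def
    by (auto intro: le_less_trans[of _ "ereal _"])
  have L: "((\<lambda>s. integral (cbox a b) (\<lambda>x1. fp x1 s - fm x1 s)) has_field_derivative
      integral (cbox a b) (\<lambda>x1. Dpt x1 t - Dmt x1 t)) (at t within time_int T)"
  proof (rule leibniz_rule_field_derivative[OF _ _ _ t conv])
    fix s x1 assume s: "s \<in> time_int T" and x1: "x1 \<in> cbox a b"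
    show "((\<lambda>s. fp x1 s - fm x1 s) has_field_derivative Dpt x1 s - Dmt x1 s) (at s within time_int T)"
      using x1 by (intro derivative_intros C1_time_deriv[OF C1p s] C1_time_deriv[OF C1m s]) auto
  next
    fix s assume s: "s \<in> time_int T"
    have "continuous_on {a..b} (\<lambda>x1. fp x1 s - fm x1 s)"
      using C1_space_deriv[OF C1p s] C1_space_deriv[OF C1m s]
      by (intro continuous_on_diff has_derivative_continuous_on) blast+
    then show "(\<lambda>x1. fp x1 s - fm x1 s) integrable_on cbox a b"
      by (simp add: integrable_continuous_interval)
  next
    have cp: "continuous_on ({a..b} \<times> time_int T) (\<lambda>q. Dpt (fst q) (snd q))"
      using C1p unfolding C1_with_partials_def by blast
    have cm: "continuous_on ({a..b} \<times> time_int T) (\<lambda>q. Dmt (fst q) (snd q))"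
      using C1m unfolding C1_with_partials_def by blast
    have sw: "continuous_on (time_int T \<times> cbox a b) (\<lambda>q. (snd q, fst q))"
      by (intro continuous_intros)
    have im: "(\<lambda>q. (snd q, fst q)) ` (time_int T \<times> cbox a b) \<subseteq> {a..b} \<times> time_int T" by auto
    have "continuous_on (time_int T \<times> cbox a b) (\<lambda>q. Dpt (snd q) (fst q) - Dmt (snd q) (fst q))"
      using continuous_on_compose2[OF cp sw im] continuous_on_compose2[OF cm sw im]
      by (intro continuous_on_diff) auto
    then show "continuous_on (time_int T \<times> cbox a b) (\<lambda>(s, x1). Dpt x1 s - Dmt x1 s)"
      by (simp add: case_prod_beta)
  qed
  have "integral (cbox a b) (\<lambda>x1. Dpt x1 t - Dmt x1 t) =
      \<psi> (b, fp b t, t) - \<psi> (b, fm b t, t) + \<psi> (a, fm a t, t) - \<psi> (a, fp a t, t)"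
    using integral_unique[OF has_integral_diff[OF IP IM]] by simp
  then show "((\<lambda>s. integral {a..b} (\<lambda>x1. fp x1 s - fm x1 s)) has_real_derivative
              (\<psi> (b, fp b t, t) - \<psi> (b, fm b t, t) + \<psi> (a, fm a t, t) - \<psi> (a, fp a t, t)))
             (at t within time_int T)"
    using L by simp
qed

end
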